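(* Let $\phi:\mathbb{N}_0\to\mathbb{N}_0$ satisfy $\phi(0)=0$ and $\phi(x)\neq x$ for all $x\in\mathbb{N}$. If $\phi$ has a cycle (i.e. there exist $m\ge2$ and $x\in\mathbb{N}$ with $\phi^m(x)=x$), then there exists an integer $N\ge2$ such that $\det\widehat{M}_n(\phi)=0$ for all $n\ge N$.
   Context: $\mathbb{N}=\{1,2,\dots\}$, $\mathbb{N}_0=\mathbb{N}\cup\{0\}$, $D_n=\{1,\dots,n\}$, $D_{n,0}=D_n\cup\{0\}$. The local function $\phi_n:D_{n,0}\to D_{n,0}$ is $\phi_n(x)=\phi(x)$ if $x\in D_n$ and $\phi(x)\in D_n$, and $\phi_n(x)=0$ otherwise. For $1\le i\le n$, $\mathbf{e}_i$ is the $i$-th unit vector in $\mathbb{Z}^n$ and $\mathbf{e}_0$ is the zero vector. $M_n(\phi)$ is the $n\times n$ matrix whose $j$-th column is $\mathbf{e}_{\phi_n(j)}$ ($1\le j\le n$), and $\widehat{M}_n(\phi)=I-M_n(\phi)$. *)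

theory Defs
  imports Main "Jordan_Normal_Form.Determinant"
begin

definition local_fun :: "nat \<Rightarrow> (nat \<Rightarrow> nat) \<Rightarrow> nat \<Rightarrow> nat" where
  "local_fun n \<phi> x = (if x \<in> {1..n} \<and> \<phi> x \<in> {1..n} then \<phi> x else 0)"

text \<open>M_n(phi): the j-th column (1-based) is e_{phi_n(j)}, with e_0 the zero vector.
  Jordan_Normal_Form matrices are 0-indexed, so entry (i,j) corresponds to row i+1, column j+1.\<close>
definition M_mat :: "nat \<Rightarrow> (nat \<Rightarrow> nat) \<Rightarrow> int mat" where
  "M_mat n \<phi> = mat n n (\<lambda>(i, j). if local_fun n \<phi> (j + 1) = i + 1 then 1 else 0)"

definition Mhat_mat :: "nat \<Rightarrow> (nat \<Rightarrow> nat) \<Rightarrow> int mat" where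
  "Mhat_mat n \<phi> = 1\<^sub>m n - M_mat n \<phi>"

end

theory Submission
  imports Defs
begin

lemma funpow_zero_fix: fixes \<phi> :: "nat \<Rightarrow> nat" and k :: nat assumes "\<phi> 0 = (0::nat)" shows "(\<phi> ^^ k) 0 = 0"
  by (induction k) (simp_all add: assms)

lemma det_zero_of_cycle:
  fixes \<phi> :: "nat \<Rightarrow> nat" and Orb :: "nat set"
  assumes cl: "\<And>a. a \<in> Orb \<Longrightarrow> \<phi> a \<in> Orb"
    and inj: "\<And>a b. a \<in> Orb \<Longrightarrow> b \<in> Orb \<Longrightarrow> \<phi> a = \<phi> b \<Longrightarrow> a = b"
    and pre: "\<And>a. a \<in> Orb \<Longrightarrow> \<exists>c\<in>Orb. \<phi> c = a"
    and sub: "Orb \<subseteq> {1..n}" and ne: "Orb \<noteq> {}"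
  shows "det (Mhat_mat n \<phi>) = 0"
proof -
  define v where "v = vec n (\<lambda>i. if i + 1 \<in> Orb then (1::int) else 0)"
  have A: "Mhat_mat n \<phi> \<in> carrier_mat n n" unfolding Mhat_mat_def M_mat_def by auto
  have v: "v \<in> carrier_vec n" unfolding v_def by auto
  obtain a where a: "a \<in> Orb" using ne by auto
  have "a \<in> {1..n}" using a sub by blast
  hence "a - 1 < n" "a \<ge> 1" by auto
  hence "v $ (a - 1) = 1" using a unfolding v_def by auto
  hence vnz: "v \<noteq> 0\<^sub>v n" using \<open>a - 1 < n\<close> by auto
  have key: "(\<Sum>j<n. (if local_fun n \<phi> (j+1) = i+1 then (1::int) else 0) * v $ j)
           = (if i + 1 \<in> Orb then 1 else 0)" if i: "i < n" for i
  proof -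
    have "(\<Sum>j<n. (if local_fun n \<phi> (j+1) = i+1 then (1::int) else 0) * v $ j)
        = (\<Sum>j<n. if j + 1 \<in> Orb \<and> \<phi> (j+1) = i+1 then 1 else 0)"
    proof (rule sum.cong)
      fix j assume j: "j \<in> {..<n}"
      show "(if local_fun n \<phi> (j+1) = i+1 then (1::int) else 0) * v $ j
          = (if j + 1 \<in> Orb \<and> \<phi> (j+1) = i+1 then 1 else 0)"
      proof (cases "j + 1 \<in> Orb")
        case True
        then have "\<phi> (j+1) \<in> Orb" using cl by blast
        then have "\<phi> (j+1) \<in> {1..n}" using sub by blast
        then have "local_fun n \<phi> (j+1) = \<phi> (j+1)" using j unfolding local_fun_def by auto
        then show ?thesis using True j unfolding v_def by auto
      qed (use j in \<open>auto simp: v_def\<close>)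
    qed simp
    also have "\<dots> = of_nat (card {j \<in> {..<n}. j + 1 \<in> Orb \<and> \<phi> (j+1) = i+1})"
      by (simp add: sum.If_cases Int_def)
    also have "\<dots> = (if i + 1 \<in> Orb then 1 else 0)"
    proof (cases "i + 1 \<in> Orb")
      case True
      then obtain c where c: "c \<in> Orb" "\<phi> c = i + 1" using pre by blast
      have "c \<ge> 1" "c \<le> n" using c sub by auto
      have "{j \<in> {..<n}. j + 1 \<in> Orb \<and> \<phi> (j+1) = i+1} = {c - 1}"
      proof safe
        fix j assume "j < n" "j + 1 \<in> Orb" "\<phi> (j+1) = i+1"
        then have "j + 1 = c" using inj c by metis
        then show "j = c - 1" by simp
      qed (use c \<open>c \<ge> 1\<close> \<open>c \<le> n\<close> in auto)
      then show ?thesis using True by simp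
    next
      case False
      have "{j \<in> {..<n}. j + 1 \<in> Orb \<and> \<phi> (j+1) = i+1} = {}"
        using False cl by force
      then show ?thesis using False by simp
    qed
    finally show ?thesis .
  qed
  have "Mhat_mat n \<phi> *\<^sub>v v = 0\<^sub>v n"
  proof (rule eq_vecI)
    show "dim_vec (Mhat_mat n \<phi> *\<^sub>v v) = dim_vec (0\<^sub>v n)"
      unfolding Mhat_mat_def M_mat_def by simp
    fix i assume "i < dim_vec (0\<^sub>v n)"
    then have i: "i < n" by simp
    have "(Mhat_mat n \<phi> *\<^sub>v v) $ i = (\<Sum>j<n. ((if i = j then 1 else 0)
        - (if local_fun n \<phi> (j+1) = i+1 then (1::int) else 0)) * v $ j)"
      using i v unfolding Mhat_mat_def M_mat_def
      by (simp add: scalar_prod_def lessThan_atLeast0)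
    also have "\<dots> = (\<Sum>j<n. (if i = j then 1 else 0) * v $ j)
       - (\<Sum>j<n. (if local_fun n \<phi> (j+1) = i+1 then (1::int) else 0) * v $ j)"
      by (simp add: left_diff_distrib sum_subtractf)
    also have "(\<Sum>j<n. (if i = j then 1 else 0) * v $ j) = v $ i"
    proof -
      have "(\<Sum>j<n. (if i = j then 1 else 0) * v $ j) = (\<Sum>j<n. if i = j then v $ j else 0)"
        by (rule sum.cong) auto
      then show ?thesis using i by simp
    qed
    finally show "(Mhat_mat n \<phi> *\<^sub>v v) $ i = 0\<^sub>v n $ i"
      using key[OF i] i unfolding v_def by simp
  qed
  then show ?thesis using det_0_iff_vec_prod_zero[OF A] v vnz by blast
qed

theorem corollary1p4:
  fixes \<phi> :: "nat \<Rightarrow> nat"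
  assumes "\<phi> 0 = 0"
    and "\<forall>x\<ge>1. \<phi> x \<noteq> x"
    and "\<exists>m\<ge>2. \<exists>x\<ge>1. (\<phi> ^^ m) x = x"
  shows "\<exists>N::nat\<ge>2. \<forall>n\<ge>N. det (Mhat_mat n \<phi>) = 0"
proof -
  obtain m x where m: "m \<ge> 2" and x: "x \<ge> 1" and mx: "(\<phi> ^^ m) x = x" using assms(3) by blast
  define Orb where "Orb = (\<lambda>k. (\<phi> ^^ k) x) ` {..<m}"
  have fin: "finite Orb" unfolding Orb_def by simp
  have ne: "Orb \<noteq> {}" unfolding Orb_def using m by (auto simp: lessThan_empty_iff)
  have cyc: "(\<phi> ^^ m) a = a" if aO: "a \<in> Orb" for a
  proof -
    obtain k where a: "a = (\<phi> ^^ k) x" using aO unfolding Orb_def by blast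
    have "(\<phi> ^^ m) a = (\<phi> ^^ (m + k)) x" unfolding a by (simp add: funpow_add)
    also have "\<dots> = (\<phi> ^^ k) ((\<phi> ^^ m) x)" by (simp add: funpow_add add.commute)
    finally show ?thesis using mx a by simp
  qed
  have cl: "\<phi> a \<in> Orb" if aO: "a \<in> Orb" for a
  proof -
    obtain k where k: "k < m" and a: "a = (\<phi> ^^ k) x" using aO unfolding Orb_def by auto
    have e: "\<phi> a = (\<phi> ^^ Suc k) x" unfolding a by simp
    show ?thesis
    proof (cases "Suc k < m")
      case True then show ?thesis unfolding e Orb_def by blast
    next
      case False then have "Suc k = m" using k by simp
      then have "\<phi> a = (\<phi> ^^ 0) x" using e mx by simp
      moreover have "(0::nat) \<in> {..<m}" using m by simp
      ultimately show ?thesis unfolding Orb_def by (metis image_eqI)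
    qed
  qed
  have clk: "(\<phi> ^^ k) a \<in> Orb" if "a \<in> Orb" for a k
    by (induction k) (use that cl in auto)
  have inj: "a = b" if "a \<in> Orb" "b \<in> Orb" "\<phi> a = \<phi> b" for a b
  proof -
    have mm: "m = Suc (m - 1)" using m by simp
    have "a = (\<phi> ^^ m) a" using cyc that by simp
    also have "\<dots> = (\<phi> ^^ (m-1)) (\<phi> a)" by (subst mm) (simp only: funpow_Suc_right o_apply)
    also have "\<dots> = (\<phi> ^^ (m-1)) (\<phi> b)" using that by simp
    also have "\<dots> = (\<phi> ^^ m) b" by (subst (2) mm) (simp only: funpow_Suc_right o_apply)
    also have "\<dots> = b" using cyc that by simp
    finally show ?thesis .
  qed
  have pre: "\<exists>c\<in>Orb. \<phi> c = a" if aO: "a \<in> Orb" for a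
  proof -
    have mm: "m = Suc (m - 1)" using m by simp
    have "\<phi> ((\<phi> ^^ (m-1)) a) = (\<phi> ^^ m) a" by (subst (2) mm) simp
    then show ?thesis using cyc[OF that] clk[OF that] by metis
  qed
  have pos: "a \<ge> 1" if aO: "a \<in> Orb" for a
  proof (rule ccontr)
    assume "\<not> a \<ge> 1" then have "a = 0" by simp
    obtain k where k: "k < m" and a: "a = (\<phi> ^^ k) x" using aO unfolding Orb_def by auto
    have "(\<phi> ^^ m) x = (\<phi> ^^ (m - k)) ((\<phi> ^^ k) x)"
      using k by (simp add: funpow_add[symmetric, THEN fun_cong, simplified])
    also have "\<dots> = 0" using \<open>a = 0\<close> a funpow_zero_fix[of \<phi>, OF assms(1)] by simp
    finally show False using mx x by simp
  qed
  define N where "N = max 2 (Max Orb)"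
  have "\<forall>n\<ge>N. det (Mhat_mat n \<phi>) = 0"
  proof (intro allI impI)
    fix n assume n: "n \<ge> N"
    have "Orb \<subseteq> {1..n}"
    proof
      fix a assume a: "a \<in> Orb"
      have "a \<le> Max Orb" using fin a by simp
      then show "a \<in> {1..n}" using n pos[OF a] unfolding N_def by auto
    qed
    then show "det (Mhat_mat n \<phi>) = 0"
      using det_zero_of_cycle[of Orb \<phi> n] cl inj pre ne by blast
  qed
  then show ?thesis unfolding N_def by (intro exI[of _ "max 2 (Max Orb)"]) auto
qed

end
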